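(* Let $h$ be a hauptmodul for a genus zero modular group $\Gamma$ and $t$ a hauptmodul for a genus zero modular group $\Gamma'$, and let $n$ be a positive integer. Suppose $h(\tau)$ and $h(n\tau)$ can both be expressed as rational functions of $t$, say $h(\tau) = h_1(t(\tau))$ and $h(n\tau) = h_2(t(\tau))$. Then $$h_1'(t)^2\, Q_\Gamma(h_1(t)) + \tfrac{1}{2}\{h_1(t),t\} \;=\; h_2'(t)^2\, Q_\Gamma(h_2(t)) + \tfrac{1}{2}\{h_2(t),t\} \;=\; Q_{\Gamma'}(t).$$
   Context: A genus zero modular group $\Gamma$ is a discrete subgroup of $\mathrm{PSL}(2,\mathbb{R})$ acting on the upper half plane $\mathbb{H}$ (commensurable with $\mathrm{PSL}(2,\mathbb{Z})$) whose compactified quotient $\Gamma\backslash\mathbb{H}$ has genus $0$; a hauptmodul for $\Gamma$ is a $\Gamma$-invariant meromorphic function on $\mathbb{H}$ generating the function field of this genus zero curve. For such a hauptmodul $h$, the "Q-value" $Q_\Gamma$ is the rational function such that $h$ satisfies the Schwarzian differential equation $$h'(\tau)^2\, Q_\Gamma(h(\tau)) + \tfrac{1}{2}\{h(\tau),\tau\} = 0,$$ where $\{f(x),x\} = \frac{2 f'(x) f'''(x) - 3 f''(x)^2}{2 f'(x)^2}$ denotes the Schwarzian derivative. $Q_{\Gamma'}$ is defined in the same way for the hauptmodul $t$ of $\Gamma'$. *)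

theory Defs
  imports "HOL-Complex_Analysis.Complex_Analysis" "HOL-Computational_Algebra.Polynomial"
begin

definition upper_half :: "complex set" where
  "upper_half = {z. 0 < Im z}"

definition schwarzian :: "(complex \<Rightarrow> complex) \<Rightarrow> complex \<Rightarrow> complex" where
  "schwarzian f x =
     (2 * deriv f x * (deriv ^^ 3) f x - 3 * ((deriv ^^ 2) f x)^2) / (2 * (deriv f x)^2)"

definition rat_fun :: "complex poly \<Rightarrow> complex poly \<Rightarrow> complex \<Rightarrow> complex" where
  "rat_fun p q z = poly p z / poly q z"

definition is_Q_value :: "(complex \<Rightarrow> complex) \<Rightarrow> complex poly \<Rightarrow> complex poly \<Rightarrow> bool" where
  "is_Q_value h a b \<longleftrightarrow> b \<noteq> 0 \<and>
     (\<forall>\<tau>\<in>upper_half. h analytic_on {\<tau>} \<and> deriv h \<tau> \<noteq> 0 \<and> poly b (h \<tau>) \<noteq> 0 \<longrightarrow>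
        (deriv h \<tau>)^2 * rat_fun a b (h \<tau>) + schwarzian h \<tau> / 2 = 0)"

text \<open>The analytic properties of a hauptmodul used here: a nonconstant meromorphic
  function on the upper half plane.\<close>
definition nonconst_meromorphic_H :: "(complex \<Rightarrow> complex) \<Rightarrow> bool" where
  "nonconst_meromorphic_H h \<longleftrightarrow> h meromorphic_on upper_half \<and>
     (\<exists>\<tau>1\<in>upper_half. \<exists>\<tau>2\<in>upper_half.
        h analytic_on {\<tau>1} \<and> h analytic_on {\<tau>2} \<and> h \<tau>1 \<noteq> h \<tau>2)"

end

theory Submission imports Defs begin

definition SQ :: "(complex \<Rightarrow> complex) \<Rightarrow> (complex \<Rightarrow> complex) \<Rightarrow> complex \<Rightarrow> complex" where
  "SQ Q f y = (deriv f y)^2 * Q (f y) + schwarzian f y / 2"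

lemma open_analytic_pts: "open {x. f analytic_on {x}}"
proof (rule openI)
  fix x assume "x \<in> {x. f analytic_on {x}}"
  then obtain e where e: "e > 0" "f holomorphic_on ball x e" by (auto simp: analytic_on_def)
  hence "f analytic_on ball x e" by (simp add: analytic_on_open)
  hence "ball x e \<subseteq> {x. f analytic_on {x}}" using analytic_on_subset by blast
  thus "\<exists>e>0. ball x e \<subseteq> {x. f analytic_on {x}}" using e by blast
qed

lemma open_infinite:
  fixes A :: "complex set"
  assumes "open A" "A \<noteq> {}" shows "infinite A"
proof
  assume fin: "finite A"
  obtain x where "x \<in> A" using assms by auto
  then obtain e where "e > 0" "ball x e \<subseteq> A" using assms(1) open_contains_ball by blast
  hence "countable (ball x e)" using fin countable_finite countable_subset by blast
  thus False using uncountable_ball \<open>e > 0\<close> by blast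
qed

lemma rat_fun_holo: "rat_fun p q holomorphic_on {y. poly q y \<noteq> 0}"
  unfolding rat_fun_def by (intro holomorphic_intros poly_holomorphic_on) auto

lemma deriv_rat_fun:
  assumes "poly q y \<noteq> 0"
  shows "deriv (rat_fun p q) y = poly (pderiv p * q - p * pderiv q) y / (poly q y)^2"
proof -
  have "((\<lambda>y. poly p y / poly q y) has_field_derivative
     (poly (pderiv p) y * poly q y - poly p y * poly (pderiv q) y) / (poly q y * poly q y)) (at y)"
    by (rule derivative_eq_intros poly_DERIV refl | use assms in simp)+
  hence "deriv (\<lambda>y. poly p y / poly q y) y = (poly (pderiv p) y * poly q y - poly p y * poly (pderiv q) y) / (poly q y * poly q y)"
    by (rule DERIV_imp_deriv)
  moreover have "rat_fun p q = (\<lambda>y. poly p y / poly q y)" by (rule ext) (simp add: rat_fun_def)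
  ultimately show ?thesis by (simp add: power2_eq_square)
qed

lemma fp: "(deriv ^^ 2) g = deriv (deriv g)" "(deriv ^^ 3) g = deriv (deriv (deriv g))"
  by (simp_all add: numeral_eq_Suc)
lemma chain3:
  fixes g t R :: "complex \<Rightarrow> complex"
  assumes N: "open N" "\<tau> \<in> N" and Om: "open Om" and ht: "t holomorphic_on N"
    and hR: "R holomorphic_on Om" and sub: "t ` N \<subseteq> Om" and eq: "\<forall>x\<in>N. g x = R (t x)"
  shows "deriv g \<tau> = deriv R (t \<tau>) * deriv t \<tau> \<and>
    (deriv^^2) g \<tau> = (deriv^^2) R (t \<tau>) * (deriv t \<tau>)^2 + deriv R (t \<tau>) * (deriv^^2) t \<tau> \<and>
    (deriv^^3) g \<tau> = (deriv^^3) R (t \<tau>) * (deriv t \<tau>)^3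
        + 3 * (deriv^^2) R (t \<tau>) * deriv t \<tau> * (deriv^^2) t \<tau> + deriv R (t \<tau>) * (deriv^^3) t \<tau>"
proof -
  define t1 where "t1 = deriv t" define t2 where "t2 = deriv t1" define t3 where "t3 = deriv t2"
  define R1 where "R1 = deriv R" define R2 where "R2 = deriv R1" define R3 where "R3 = deriv R2"
  have ht1: "t1 holomorphic_on N" unfolding t1_def using ht N(1) by (rule holomorphic_deriv)
  have ht2: "t2 holomorphic_on N" unfolding t2_def using ht1 N(1) by (rule holomorphic_deriv)
  have hR1: "R1 holomorphic_on Om" unfolding R1_def using hR Om by (rule holomorphic_deriv)
  have hR2: "R2 holomorphic_on Om" unfolding R2_def using hR1 Om by (rule holomorphic_deriv)
  have dt: "(t has_field_derivative t1 x) (at x)" "(t1 has_field_derivative t2 x) (at x)"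
    "(t2 has_field_derivative t3 x) (at x)" if "x \<in> N" for x
    using holomorphic_derivI[OF ht N(1) that] holomorphic_derivI[OF ht1 N(1) that]
      holomorphic_derivI[OF ht2 N(1) that] by (auto simp: t1_def t2_def t3_def)
  have dR: "(R has_field_derivative R1 y) (at y)" "(R1 has_field_derivative R2 y) (at y)"
    "(R2 has_field_derivative R3 y) (at y)" if "y \<in> Om" for y
    using holomorphic_derivI[OF hR Om that] holomorphic_derivI[OF hR1 Om that]
      holomorphic_derivI[OF hR2 Om that] by (auto simp: R1_def R2_def R3_def)
  have tO: "t x \<in> Om" if "x \<in> N" for x using sub that by auto
  have ev: "eventually (\<lambda>y. y \<in> N) (nhds x)" if "x \<in> N" for x
    using N(1) that eventually_nhds_in_open by blast
  define D1 where "D1 x = R1 (t x) * t1 x" for x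
  define D2 where "D2 x = R2 (t x) * t1 x * t1 x + R1 (t x) * t2 x" for x
  define D3 where "D3 x = R3 (t x) * t1 x * t1 x * t1 x + 3 * R2 (t x) * t1 x * t2 x + R1 (t x) * t3 x" for x
  have e1: "deriv g x = D1 x" if "x \<in> N" for x
  proof -
    have "deriv g x = deriv (\<lambda>x. R (t x)) x"
      by (rule deriv_cong_ev) (use ev[OF that] eq in \<open>auto elim: eventually_mono\<close>)
    also have "\<dots> = D1 x" unfolding D1_def
      by (rule DERIV_imp_deriv, rule DERIV_chain2[OF dR(1)[OF tO[OF that]] dt(1)[OF that]])
    finally show ?thesis .
  qed
  have e2: "deriv (deriv g) x = D2 x" if "x \<in> N" for x
  proof -
    have "deriv (deriv g) x = deriv D1 x"
      by (rule deriv_cong_ev) (use ev[OF that] e1 in \<open>auto elim: eventually_mono\<close>)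
    also have "\<dots> = D2 x" unfolding D1_def D2_def
      apply (rule DERIV_imp_deriv)
      apply (rule derivative_eq_intros DERIV_chain2[OF dR(2)[OF tO[OF that]] dt(1)[OF that]] dt[OF that] | simp)+
      done
    finally show ?thesis .
  qed
  have e3: "deriv (deriv (deriv g)) x = D3 x" if "x \<in> N" for x
  proof -
    have "deriv (deriv (deriv g)) x = deriv D2 x"
      by (rule deriv_cong_ev) (use ev[OF that] e2 in \<open>auto elim: eventually_mono\<close>)
    also have "\<dots> = D3 x" unfolding D3_def D2_def
      apply (rule DERIV_imp_deriv)
      apply (rule derivative_eq_intros DERIV_chain2[OF dR(3)[OF tO[OF that]] dt(1)[OF that]]
         DERIV_chain2[OF dR(2)[OF tO[OF that]] dt(1)[OF that]] dt[OF that] | simp)+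
      apply (simp add: algebra_simps)
      done
    finally show ?thesis .
  qed
  show ?thesis using e1[OF N(2)] e2[OF N(2)] e3[OF N(2)]
    by (simp add: fp D1_def D2_def D3_def t1_def t2_def t3_def R1_def R2_def R3_def power2_eq_square power3_eq_cube algebra_simps)
qed
lemma alg_pull:
  fixes a b c t1 t2 t3 Qg Qt :: complex
  assumes "a \<noteq> 0" "t1 \<noteq> 0"
   and Eg: "(a*t1)^2*Qg + (2*(a*t1)*(c*t1^3+3*b*t1*t2+a*t3) - 3*(b*t1^2+a*t2)^2)/(2*(a*t1)^2)/2 = 0"
   and Et: "t1^2*Qt + (2*t1*t3 - 3*t2^2)/(2*t1^2)/2 = 0"
  shows "a^2*Qg + (2*a*c - 3*b^2)/(2*a^2)/2 = Qt"
proof -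
  have E1: "2*a^2*t1*t3 + 2*a*c*t1^4 + 4*Qg*a^4*t1^4 = 3*a^2*t2^2 + 3*b^2*t1^4"
    using Eg assms(1,2) by (simp add: field_simps power2_eq_square power3_eq_cube) (simp add: algebra_simps power4_eq_xxxx)
  have E2: "2*t1*t3 + 4*Qt*t1^4 = 3*t2^2"
    using Et assms(1,2) by (simp add: field_simps power2_eq_square power3_eq_cube) (simp add: algebra_simps power4_eq_xxxx)
  have "t1^2 * t1^2 * (2*a*c + 4*Qg*a^4 - 3*b^2 - 4*Qt*a^2) = 0"
  proof -
    have "t1^2 * t1^2 * (2*a*c + 4*Qg*a^4 - 3*b^2 - 4*Qt*a^2) =
      (2*a^2*t1*t3 + 2*a*c*t1^4 + 4*Qg*a^4*t1^4 - (3*a^2*t2^2 + 3*b^2*t1^4)) - a^2*(2*t1*t3 + 4*Qt*t1^4 - 3*t2^2)"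
      by (simp add: algebra_simps power2_eq_square power4_eq_xxxx)
    also have "\<dots> = 0" using E1 E2 by simp
    finally show ?thesis .
  qed
  hence E3: "2*a*c + 4*Qg*a^4 - 3*b^2 - 4*Qt*a^2 = 0" using assms(2) by simp
  show ?thesis using E3 assms(1) by (simp add: field_simps power2_eq_square power4_eq_xxxx)
qed
lemma alg_scale:
  fixes n h1 h2 h3 Q :: complex
  assumes "n \<noteq> 0" "h1^2*Q + (2*h1*h3 - 3*h2^2)/(2*h1^2)/2 = 0"
  shows "(n*h1)^2*Q + (2*(n*h1)*(n^3*h3) - 3*(n^2*h2)^2)/(2*(n*h1)^2)/2 = 0"
proof (cases "h1 = 0")
  case True thus ?thesis using assms by simp
next
  case False
  have "(n*h1)^2*Q + (2*(n*h1)*(n^3*h3) - 3*(n^2*h2)^2)/(2*(n*h1)^2)/2 = n^2 * (h1^2*Q + (2*h1*h3 - 3*h2^2)/(2*h1^2)/2)"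
    using False assms(1) by (simp add: field_simps power2_eq_square power3_eq_cube)
  thus ?thesis using assms by simp
qed

lemma pullback:
  fixes g t R Qh Qt :: "complex \<Rightarrow> complex"
  assumes N: "open N" "\<tau> \<in> N" and Om: "open Om" and ht: "t holomorphic_on N"
    and hR: "R holomorphic_on Om" and sub: "t ` N \<subseteq> Om" and eq: "\<forall>x\<in>N. g x = R (t x)"
    and Eg: "SQ Qh g \<tau> = 0" and Et: "SQ Qt t \<tau> = 0"
    and nz: "deriv t \<tau> \<noteq> 0" "deriv R (t \<tau>) \<noteq> 0"
  shows "SQ Qh R (t \<tau>) = Qt (t \<tau>)"
proof -
  note c = chain3[OF N Om ht hR sub eq]
  have gt: "g \<tau> = R (t \<tau>)" using eq N(2) by auto
  show ?thesis
    using alg_pull[OF nz(2) nz(1), of "Qh (R (t \<tau>))" "(deriv^^3) R (t \<tau>)" "(deriv^^2) R (t \<tau>)"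
        "(deriv^^2) t \<tau>" "(deriv^^3) t \<tau>" "Qt (t \<tau>)"] Eg Et c gt
    by (simp add: SQ_def schwarzian_def)
qed

lemma scale:
  fixes h Q :: "complex \<Rightarrow> complex" and c :: complex
  assumes Om: "open Om" and hh: "h holomorphic_on Om" and inO: "c * \<tau> \<in> Om" and c: "c \<noteq> 0"
  shows "deriv (\<lambda>w. h (c * w)) \<tau> = c * deriv h (c * \<tau>)"
    and "SQ Q h (c * \<tau>) = 0 \<Longrightarrow> SQ Q (\<lambda>w. h (c * w)) \<tau> = 0"
proof -
  have S: "open {w. c * w \<in> Om}"
    using open_vimage[OF Om, of "\<lambda>w. c * w"] by (simp add: vimage_def continuous_intros)
  have k: "(deriv ^^ k) (\<lambda>w. h (c * w)) \<tau> = c^k * (deriv ^^ k) h (c * \<tau>)" for k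
    by (rule higher_deriv_compose_linear[OF hh S Om]) (use inO in auto)
  show d1: "deriv (\<lambda>w. h (c * w)) \<tau> = c * deriv h (c * \<tau>)" using k[of 1] by simp
  assume "SQ Q h (c * \<tau>) = 0"
  thus "SQ Q (\<lambda>w. h (c * w)) \<tau> = 0"
    using alg_scale[OF c, of "deriv h (c * \<tau>)" "Q (h (c*\<tau>))" "(deriv^^3) h (c * \<tau>)" "(deriv^^2) h (c * \<tau>)"]
      k[of 2] k[of 3] d1
    by (simp add: SQ_def schwarzian_def)
qed


lemma open_poly_nz: "open {y::complex. poly q y \<noteq> 0}"
  by (intro open_Collect_neq continuous_intros)

lemma SQ_holo:
  assumes Om: "open Om" and hR: "R holomorphic_on Om" and sub: "S \<subseteq> Om"
    and nz: "\<forall>y\<in>S. deriv R y \<noteq> 0 \<and> poly qb (R y) \<noteq> 0"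
  shows "SQ (rat_fun qa qb) R holomorphic_on S"
proof -
  have hk: "(deriv^^k) R holomorphic_on S" for k
    using holomorphic_higher_deriv[OF hR Om] holomorphic_on_subset sub by blast
  have h0: "R holomorphic_on S" using hk[of 0] by simp
  have h1: "deriv R holomorphic_on S" using hk[of 1] by simp
  have e: "SQ (rat_fun qa qb) R = (\<lambda>y. (deriv R y)^2 * (poly qa (R y) / poly qb (R y)) +
      (2 * deriv R y * (deriv^^3) R y - 3 * ((deriv^^2) R y)^2) / (2 * (deriv R y)^2) / 2)"
    by (rule ext) (simp add: SQ_def schwarzian_def rat_fun_def)
  show ?thesis unfolding e
    by (intro holomorphic_intros poly_holomorphic_on h0 h1 hk) (use nz in auto)
qed

theorem theorem5:
  fixes h t :: "complex \<Rightarrow> complex"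
    and qa qb qa' qb' :: "complex poly"   \<comment> \<open>Q_Gamma = qa/qb, Q_Gamma' = qa'/qb'\<close>
    and p1 q1 p2 q2 :: "complex poly"     \<comment> \<open>h_1 = p1/q1, h_2 = p2/q2\<close>
    and n :: nat
  assumes h_haupt: "nonconst_meromorphic_H h"
    and t_haupt: "nonconst_meromorphic_H t"
    and QG: "is_Q_value h qa qb"
    and QG': "is_Q_value t qa' qb'"
    and n_pos: "n > 0"
    and q1: "q1 \<noteq> 0" and q2: "q2 \<noteq> 0"
    and h1: "\<forall>\<tau>\<in>upper_half. h analytic_on {\<tau>} \<and> t analytic_on {\<tau>} \<and> poly q1 (t \<tau>) \<noteq> 0
               \<longrightarrow> h \<tau> = rat_fun p1 q1 (t \<tau>)"
    and h2: "\<forall>\<tau>\<in>upper_half. h analytic_on {of_nat n * \<tau>} \<and> t analytic_on {\<tau>} \<and> poly q2 (t \<tau>) \<noteq> 0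
               \<longrightarrow> h (of_nat n * \<tau>) = rat_fun p2 q2 (t \<tau>)"
  shows "\<forall>z. poly q1 z \<noteq> 0 \<and> poly q2 z \<noteq> 0
            \<and> deriv (rat_fun p1 q1) z \<noteq> 0 \<and> deriv (rat_fun p2 q2) z \<noteq> 0
            \<and> poly qb (rat_fun p1 q1 z) \<noteq> 0 \<and> poly qb (rat_fun p2 q2 z) \<noteq> 0
            \<and> poly qb' z \<noteq> 0 \<longrightarrow>
          (deriv (rat_fun p1 q1) z)^2 * rat_fun qa qb (rat_fun p1 q1 z)
              + schwarzian (rat_fun p1 q1) z / 2
            = (deriv (rat_fun p2 q2) z)^2 * rat_fun qa qb (rat_fun p2 q2 z)
              + schwarzian (rat_fun p2 q2) z / 2
          \<and> (deriv (rat_fun p2 q2) z)^2 * rat_fun qa qb (rat_fun p2 q2 z)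
              + schwarzian (rat_fun p2 q2) z / 2
            = rat_fun qa' qb' z"
proof (intro allI impI)
  fix z
  assume zc: "poly q1 z \<noteq> 0 \<and> poly q2 z \<noteq> 0
            \<and> deriv (rat_fun p1 q1) z \<noteq> 0 \<and> deriv (rat_fun p2 q2) z \<noteq> 0
            \<and> poly qb (rat_fun p1 q1 z) \<noteq> 0 \<and> poly qb (rat_fun p2 q2 z) \<noteq> 0
            \<and> poly qb' z \<noteq> 0"
  define R1 where "R1 = rat_fun p1 q1"
  define R2 where "R2 = rat_fun p2 q2"
  define Qh where "Qh = rat_fun qa qb"
  define Qt where "Qt = rat_fun qa' qb'"
  define H where "H = upper_half"
  have qbnz: "qb \<noteq> 0" using QG by (simp add: is_Q_value_def)
  have qbnz': "qb' \<noteq> 0" using QG' by (simp add: is_Q_value_def)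
  have QGs: "SQ Qh h \<tau> = 0" if "\<tau> \<in> H" "h analytic_on {\<tau>}" "deriv h \<tau> \<noteq> 0" "poly qb (h \<tau>) \<noteq> 0" for \<tau>
    using QG that by (auto simp: is_Q_value_def SQ_def Qh_def H_def)
  have QGt: "SQ Qt t \<tau> = 0" if "\<tau> \<in> H" "t analytic_on {\<tau>}" "deriv t \<tau> \<noteq> 0" "poly qb' (t \<tau>) \<noteq> 0" for \<tau>
    using QG' that by (auto simp: is_Q_value_def SQ_def Qt_def H_def)
  have Hopen: "open H" unfolding H_def upper_half_def by (rule open_halfspace_Im_gt)
  have Hconn: "connected H" unfolding H_def upper_half_def
    by (rule convex_connected, rule convex_halfspace_Im_gt)
  have nH: "of_nat n * \<tau> \<in> H" if "\<tau> \<in> H" for \<tau>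
    using that n_pos by (simp add: H_def upper_half_def)

  define S where "S = {y. poly q1 y \<noteq> 0 \<and> poly q2 y \<noteq> 0 \<and> deriv R1 y \<noteq> 0 \<and> deriv R2 y \<noteq> 0
      \<and> poly qb (R1 y) \<noteq> 0 \<and> poly qb (R2 y) \<noteq> 0 \<and> poly qb' y \<noteq> 0}"
  have zS: "z \<in> S" using zc by (simp add: S_def R1_def R2_def)
  define P1 where "P1 = pderiv p1 * q1 - p1 * pderiv q1"
  define P2 where "P2 = pderiv p2 * q2 - p2 * pderiv q2"
  have dz1: "deriv R1 z = poly P1 z / (poly q1 z)^2"
    unfolding R1_def P1_def using zc by (intro deriv_rat_fun) auto
  have P1nz: "P1 \<noteq> 0"
  proof
    assume "P1 = 0"
    hence "deriv R1 z = 0" using dz1 by simp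
    thus False using zc by (simp add: R1_def)
  qed
  have dz2: "deriv R2 z = poly P2 z / (poly q2 z)^2"
    unfolding R2_def P2_def using zc by (intro deriv_rat_fun) auto
  have P2nz: "P2 \<noteq> 0"
  proof
    assume "P2 = 0"
    hence "deriv R2 z = 0" using dz2 by simp
    thus False using zc by (simp add: R2_def)
  qed
  have lin1: "p1 - smult c q1 \<noteq> 0" for c
  proof
    assume "p1 - smult c q1 = 0"
    hence "p1 = smult c q1" by simp
    hence "P1 = 0" by (simp add: P1_def pderiv_smult mult.commute)
    thus False using P1nz by simp
  qed
  have lin2: "p2 - smult c q2 \<noteq> 0" for c
  proof
    assume "p2 - smult c q2 = 0"
    hence "p2 = smult c q2" by simp
    hence "P2 = 0" by (simp add: P2_def pderiv_smult mult.commute)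
    thus False using P2nz by simp
  qed
  have finS: "finite (-S)"
  proof -
    have "-S \<subseteq> {y. poly q1 y = 0} \<union> {y. poly q2 y = 0} \<union> {y. poly qb' y = 0} \<union> {y. poly P1 y = 0}
        \<union> {y. poly P2 y = 0} \<union> (\<Union>c\<in>{c. poly qb c = 0}. {y. poly (p1 - smult c q1) y = 0})
        \<union> (\<Union>c\<in>{c. poly qb c = 0}. {y. poly (p2 - smult c q2) y = 0})" (is "_ \<subseteq> ?U")
    proof
      fix y assume yS: "y \<in> -S"
      show "y \<in> ?U"
      proof (cases "poly q1 y = 0 \<or> poly q2 y = 0 \<or> poly qb' y = 0")
        case True thus ?thesis by auto
      next
        case False
        hence d1: "deriv R1 y = poly P1 y / (poly q1 y)^2" and d2: "deriv R2 y = poly P2 y / (poly q2 y)^2"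
          using deriv_rat_fun by (auto simp: R1_def R2_def P1_def P2_def)
        have "deriv R1 y = 0 \<or> deriv R2 y = 0 \<or> poly qb (R1 y) = 0 \<or> poly qb (R2 y) = 0"
          using yS False by (auto simp: S_def)
        then show ?thesis
        proof (elim disjE)
          assume "deriv R1 y = 0" thus ?thesis using d1 False by simp
        next
          assume "deriv R2 y = 0" thus ?thesis using d2 False by simp
        next
          assume a: "poly qb (R1 y) = 0"
          hence "poly (p1 - smult (R1 y) q1) y = 0" using False by (simp add: R1_def rat_fun_def)
          thus ?thesis using a by blast
        next
          assume a: "poly qb (R2 y) = 0"
          hence "poly (p2 - smult (R2 y) q2) y = 0" using False by (simp add: R2_def rat_fun_def)
          thus ?thesis using a by blast
        qed
      qed
    qed
    moreover have "finite ?U"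
      using poly_roots_finite[OF q1] poly_roots_finite[OF q2] poly_roots_finite[OF qbnz']
        poly_roots_finite[OF P1nz] poly_roots_finite[OF P2nz] poly_roots_finite[OF qbnz]
        poly_roots_finite[OF lin1] poly_roots_finite[OF lin2]
      by auto
    ultimately show ?thesis by (rule finite_subset)
  qed
  have Sopen: "open S"
    using finite_imp_closed[OF finS] by (simp add: closed_def)
  have Sconn: "connected S"
  proof -
    have "connected (UNIV - (-S))"
      by (rule connected_open_diff_countable) (auto simp: countable_finite[OF finS])
    thus ?thesis by (simp add: Diff_eq)
  qed

  have tmer: "t meromorphic_on H" using t_haupt by (simp add: nonconst_meromorphic_H_def H_def)
  have hmer: "h meromorphic_on H" using h_haupt by (simp add: nonconst_meromorphic_H_def H_def)
  define Om where "Om = H - {w\<in>H. \<not> t analytic_on {w}}"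
  have spt: "{w\<in>H. \<not> t analytic_on {w}} sparse_in H"
    by (rule meromorphic_on_imp_sparse_singularities'[OF tmer])
  have Omopen: "open Om" unfolding Om_def by (rule open_diff_sparse_pts[OF Hopen spt])
  have Omconn: "connected Om" unfolding Om_def by (rule sparse_imp_connected[OF _ Hconn Hopen spt]) simp
  have OmH: "Om \<subseteq> H" by (auto simp: Om_def)
  have tanOm: "t analytic_on Om" by (subst analytic_on_analytic_at) (auto simp: Om_def)
  have tholo: "t holomorphic_on Om" using tanOm by (rule analytic_imp_holomorphic)
  obtain \<tau>1 \<tau>2 where t12: "\<tau>1 \<in> Om" "\<tau>2 \<in> Om" "t \<tau>1 \<noteq> t \<tau>2"
    using t_haupt by (auto simp: nonconst_meromorphic_H_def Om_def H_def)
  have "\<exists>\<tau>'\<in>Om. deriv t \<tau>' \<noteq> 0"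
  proof (rule ccontr)
    assume "\<not> ?thesis"
    hence "\<forall>x\<in>Om - {}. DERIV t x :> 0" using holomorphic_derivI[OF tholo Omopen] by force
    then obtain c where "\<And>x. x \<in> Om \<Longrightarrow> t x = c"
      using DERIV_zero_connected_constant[OF Omconn Omopen finite.emptyI
          holomorphic_on_imp_continuous_on[OF tholo]] by blast
    thus False using t12 by auto
  qed
  then obtain \<tau>' where \<tau>': "\<tau>' \<in> Om" "deriv t \<tau>' \<noteq> 0" by blast
  have cdt: "continuous_on Om (deriv t)"
    using holomorphic_deriv[OF tholo Omopen] by (rule holomorphic_on_imp_continuous_on)
  obtain e where e: "e > 0" "\<forall>y. dist \<tau>' y < e \<longrightarrow> deriv t y \<noteq> 0"
    using continuous_on_open_avoid[OF cdt Omopen \<tau>'] by blast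
  obtain r0 where r0: "r0 > 0" "ball \<tau>' r0 \<subseteq> Om" using Omopen \<tau>'(1) open_contains_ball by blast
  define r where "r = min e r0"
  define B0 where "B0 = ball \<tau>' r"
  have r: "r > 0" using e r0 by (simp add: r_def)
  have B0Om: "B0 \<subseteq> Om" using r0 by (auto simp: B0_def r_def)
  have B0d: "\<forall>y\<in>B0. deriv t y \<noteq> 0" using e by (auto simp: B0_def r_def)
  define Eh where "Eh = {w\<in>H. \<not> h analytic_on {w}}"
  have sph: "Eh sparse_in H" unfolding Eh_def by (rule meromorphic_on_imp_sparse_singularities'[OF hmer])
  have cEh: "countable Eh" using sparse_imp_countable[OF Hopen sph] by (simp add: Eh_def Int_absorb1)
  define bad where "bad = Eh \<union> (\<lambda>y. y / of_nat n) ` Eh"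
  have cbad: "countable bad" using cEh by (simp add: bad_def)
  have "\<not> B0 \<subseteq> bad"
  proof
    assume "B0 \<subseteq> bad"
    hence "countable B0" using cbad countable_subset by blast
    thus False using uncountable_ball[OF r] by (simp add: B0_def) blast
  qed
  then obtain \<tau>0 where \<tau>0: "\<tau>0 \<in> B0" "\<tau>0 \<notin> bad" by blast
  have \<tau>0H: "\<tau>0 \<in> H" using \<tau>0 B0Om OmH by auto
  have han0: "h analytic_on {\<tau>0}" using \<tau>0 \<tau>0H by (auto simp: bad_def Eh_def)
  have hnan0: "h analytic_on {of_nat n * \<tau>0}"
  proof (rule ccontr)
    assume "\<not> ?thesis"
    hence "of_nat n * \<tau>0 \<in> Eh" using nH[OF \<tau>0H] by (simp add: Eh_def)
    moreover have "\<tau>0 = (of_nat n * \<tau>0) / of_nat n" using n_pos by simp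
    ultimately have "\<tau>0 \<in> bad" unfolding bad_def by blast
    thus False using \<tau>0 by blast
  qed
  define G where "G = B0 \<inter> {x. h analytic_on {x}} \<inter> {x. h analytic_on {of_nat n * x}}"
  have Gopen: "open G"
  proof -
    have "open ((\<lambda>x. of_nat n * x) -` {x. h analytic_on {x}})"
      by (rule open_vimage[OF open_analytic_pts]) (intro continuous_intros)
    hence "open {x. h analytic_on {of_nat n * x}}" by (simp add: vimage_def)
    thus ?thesis unfolding G_def B0_def by (intro open_Int open_ball open_analytic_pts)
  qed
  have \<tau>0G: "\<tau>0 \<in> G" using \<tau>0 han0 hnan0 by (simp add: G_def)
  have GB0: "G \<subseteq> B0" by (auto simp: G_def)
  have tholoB0: "t holomorphic_on B0" using tholo B0Om by (rule holomorphic_on_subset)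
  have tGopen: "open (t ` G)"
  proof (rule open_mapping_thm[OF tholoB0 _ _ Gopen GB0])
    show "open B0" "connected B0" by (simp_all add: B0_def)
    show "\<not> t constant_on B0"
    proof
      assume "t constant_on B0"
      then obtain c where c: "\<forall>x\<in>B0. t x = c" by (auto simp: constant_on_def)
      have "\<tau>' \<in> B0" using r by (simp add: B0_def)
      hence "eventually (\<lambda>x. t x = c) (nhds \<tau>')"
        using eventually_nhds_in_open[of B0 \<tau>'] c by (auto simp: B0_def elim: eventually_mono)
      hence "deriv t \<tau>' = deriv (\<lambda>_. c) \<tau>'" by (rule deriv_cong_ev) simp
      thus False using \<tau>'(2) by simp
    qed
  qed
  define W where "W = t ` G \<inter> S"
  have Wopen: "open W" unfolding W_def using tGopen Sopen by blast
  have WS: "W \<subseteq> S" by (auto simp: W_def)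
  have Wne: "W \<noteq> {}"
  proof
    assume "W = {}"
    hence "t ` G \<subseteq> -S" by (auto simp: W_def)
    hence "finite (t ` G)" using finS finite_subset by blast
    moreover have "infinite (t ` G)" using open_infinite[OF tGopen] \<tau>0G by blast
    ultimately show False by blast
  qed
  have O1: "open {y. poly q1 y \<noteq> 0}" "open {y. poly q2 y \<noteq> 0}" by (rule open_poly_nz)+
  have R1h: "R1 holomorphic_on {y. poly q1 y \<noteq> 0}" unfolding R1_def by (rule rat_fun_holo)
  have R2h: "R2 holomorphic_on {y. poly q2 y \<noteq> 0}" unfolding R2_def by (rule rat_fun_holo)
  have tholoG: "t holomorphic_on G" using tholoB0 GB0 by (rule holomorphic_on_subset)
  have ctG: "continuous_on G t" using tholoG by (rule holomorphic_on_imp_continuous_on)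
  have Gprops: "x \<in> H \<and> t analytic_on {x} \<and> h analytic_on {x} \<and> h analytic_on {of_nat n * x} \<and> deriv t x \<noteq> 0"
    if "x \<in> G" for x
    using that GB0 B0Om OmH B0d by (auto simp: G_def Om_def)

  have key: "SQ Qh R1 w = Qt w \<and> SQ Qh R2 w = Qt w" if "w \<in> W" for w
  proof -
    from that obtain \<tau> where \<tau>G: "\<tau> \<in> G" and w: "w = t \<tau>" and wS: "t \<tau> \<in> S"
      by (auto simp: W_def)
    note gp = Gprops[OF \<tau>G]
    have wc: "poly q1 (t \<tau>) \<noteq> 0" "poly q2 (t \<tau>) \<noteq> 0" "deriv R1 (t \<tau>) \<noteq> 0" "deriv R2 (t \<tau>) \<noteq> 0"
        "poly qb (R1 (t \<tau>)) \<noteq> 0" "poly qb (R2 (t \<tau>)) \<noteq> 0" "poly qb' (t \<tau>) \<noteq> 0"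
      using wS by (auto simp: S_def)
    have Et: "SQ Qt t \<tau> = 0" using QGt gp wc by blast
    define N1 where "N1 = G \<inter> t -` {y. poly q1 y \<noteq> 0}"
    have N1open: "open N1" unfolding N1_def by (rule continuous_open_preimage[OF ctG Gopen O1(1)])
    have \<tau>N1: "\<tau> \<in> N1" using \<tau>G wc by (simp add: N1_def)
    have tN1: "t holomorphic_on N1" using tholoG by (rule holomorphic_on_subset) (auto simp: N1_def)
    have sub1: "t ` N1 \<subseteq> {y. poly q1 y \<noteq> 0}" by (auto simp: N1_def)
    have eq1: "\<forall>x\<in>N1. h x = R1 (t x)"
      using h1 Gprops by (auto simp: N1_def R1_def H_def)
    note c1 = chain3[OF N1open \<tau>N1 O1(1) tN1 R1h sub1 eq1]
    have Eg1: "SQ Qh h \<tau> = 0"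
      using QGs gp c1 wc eq1 \<tau>N1 by auto
    have r1: "SQ Qh R1 (t \<tau>) = Qt (t \<tau>)"
      by (rule pullback[OF N1open \<tau>N1 O1(1) tN1 R1h sub1 eq1 Eg1 Et]) (use gp wc in auto)
    define g where "g = (\<lambda>x. h (of_nat n * x))"
    define N2 where "N2 = G \<inter> t -` {y. poly q2 y \<noteq> 0}"
    have N2open: "open N2" unfolding N2_def by (rule continuous_open_preimage[OF ctG Gopen O1(2)])
    have \<tau>N2: "\<tau> \<in> N2" using \<tau>G wc by (simp add: N2_def)
    have tN2: "t holomorphic_on N2" using tholoG by (rule holomorphic_on_subset) (auto simp: N2_def)
    have sub2: "t ` N2 \<subseteq> {y. poly q2 y \<noteq> 0}" by (auto simp: N2_def)
    have eq2: "\<forall>x\<in>N2. g x = R2 (t x)"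
      using h2 Gprops by (auto simp: N2_def R2_def H_def g_def)
    note c2 = chain3[OF N2open \<tau>N2 O1(2) tN2 R2h sub2 eq2]
    obtain e2 where e2: "e2 > 0" "h holomorphic_on ball (of_nat n * \<tau>) e2"
      using gp by (auto simp: analytic_on_def)
    have nnz: "(of_nat n :: complex) \<noteq> 0" using n_pos by simp
    note sc = scale[OF open_ball e2(2) _ nnz, of \<tau>]
    have dg: "deriv g \<tau> = of_nat n * deriv h (of_nat n * \<tau>)"
      using sc(1) e2(1) by (simp add: g_def)
    have dh: "deriv h (of_nat n * \<tau>) \<noteq> 0" using dg c2 gp wc by auto
    have gt: "h (of_nat n * \<tau>) = R2 (t \<tau>)" using eq2 \<tau>N2 by (simp add: g_def)
    have Eh: "SQ Qh h (of_nat n * \<tau>) = 0"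
      using QGs[OF nH[of \<tau>]] gp dh gt wc by auto
    have Eg2: "SQ Qh g \<tau> = 0" using sc(2)[OF _ Eh] e2(1) by (simp add: g_def)
    have r2: "SQ Qh R2 (t \<tau>) = Qt (t \<tau>)"
      by (rule pullback[OF N2open \<tau>N2 O1(2) tN2 R2h sub2 eq2 Eg2 Et]) (use gp wc in auto)
    show ?thesis using r1 r2 w by simp
  qed
  have hF1: "SQ Qh R1 holomorphic_on S" unfolding Qh_def
    by (rule SQ_holo[OF O1(1) R1h]) (auto simp: S_def)
  have hF2: "SQ Qh R2 holomorphic_on S" unfolding Qh_def
    by (rule SQ_holo[OF O1(2) R2h]) (auto simp: S_def)
  have hQt: "Qt holomorphic_on S" unfolding Qt_def
    by (rule holomorphic_on_subset[OF rat_fun_holo]) (auto simp: S_def)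
  have f1: "SQ Qh R1 z = Qt z"
    by (rule analytic_continuation_open[OF Wopen Sopen Wne Sconn WS hF1 hQt _ zS]) (use key in auto)
  have f2: "SQ Qh R2 z = Qt z"
    by (rule analytic_continuation_open[OF Wopen Sopen Wne Sconn WS hF2 hQt _ zS]) (use key in auto)
  show "(deriv (rat_fun p1 q1) z)^2 * rat_fun qa qb (rat_fun p1 q1 z)
              + schwarzian (rat_fun p1 q1) z / 2
            = (deriv (rat_fun p2 q2) z)^2 * rat_fun qa qb (rat_fun p2 q2 z)
              + schwarzian (rat_fun p2 q2) z / 2
          \<and> (deriv (rat_fun p2 q2) z)^2 * rat_fun qa qb (rat_fun p2 q2 z)
              + schwarzian (rat_fun p2 q2) z / 2
            = rat_fun qa' qb' z"
    using f1 f2 by (simp add: SQ_def R1_def R2_def Qh_def Qt_def)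
qed

end
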